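(* Assume (A1)–(A4). For all $\boldsymbol y\in U$ and $\boldsymbol\nu\in\mathscr F$, $$\|\partial_{\boldsymbol y}^{\boldsymbol\nu}\det J(\cdot,\boldsymbol y)\|_{L^\infty(D_{\rm ref})}\le d!\,(2+\xi_{\boldsymbol b})^d(2\pi)^{|\boldsymbol\nu|}\sum_{\boldsymbol w\le\boldsymbol\nu}|\boldsymbol w|!\,\boldsymbol b^{\boldsymbol w}\prod_{i\ge1}S(\nu_i,w_i).$$
   Context: Setting. Let $d\in\{2,3\}$, let $D_{\rm ref}\subset\mathbb R^d$ be a bounded Lipschitz domain and $U:=[0,1]^{\mathbb N}$. $\mathscr F$ is the set of finitely supported multi-indices in $\mathbb N_0^{\mathbb N}$; $|\boldsymbol\nu|=\sum_j\nu_j$, $\boldsymbol b^{\boldsymbol\nu}=\prod_jb_j^{\nu_j}$, $\boldsymbol m\le\boldsymbol\nu$ componentwise, $\partial_{\boldsymbol y}^{\boldsymbol\nu}=\prod_j\partial^{\nu_j}/\partial y_j^{\nu_j}$. $S(n,m)=\frac1{m!}\sum_{j=0}^m(-1)^{m-j}\binom mj j^n$ (Stirling numbers of the second kind, $S(0,0)=1$). Let $\boldsymbol\psi_i:D_{\rm ref}\to\mathbb R^d$, $\boldsymbol V(\boldsymbol x,\boldsymbol y)=\boldsymbol x+\frac1{\sqrt6}\sum_{i\ge1}\sin(2\pi y_i)\boldsymbol\psi_i(\boldsymbol x)$, $J(\boldsymbol x,\boldsymbol y)=I+\frac1{\sqrt6}\sum_{i\ge1}\sin(2\pi y_i)\boldsymbol\psi_i'(\boldsymbol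 x)$, $D(\boldsymbol y)=\boldsymbol V(D_{\rm ref},\boldsymbol y)$. $\|v\|_{L^\infty}$ is the essential sup of the absolute value / Euclidean / spectral norm; for vector fields $\|v\|_{W^{1,\infty}}=\max(\operatorname{ess\,sup}\|v\|_2,\operatorname{ess\,sup}\|v'\|_2)$. Assumptions: (A1) each $\boldsymbol V(\cdot,\boldsymbol y):\overline{D_{\rm ref}}\to\mathbb R^d$ is invertible and $C^2$; (A2) $\|\boldsymbol V(\cdot,\boldsymbol y)\|_{C^2(\overline{D_{\rm ref}})}\le C$ and $\|\boldsymbol V^{-1}(\cdot,\boldsymbol y)\|_{C^2(\overline{D(\boldsymbol y)})}\le C$ uniformly in $\boldsymbol y$; (A3) there are $0<\sigma_{\min}\le1\le\sigma_{\max}<\infty$ such that all singular values of $J(\boldsymbol x,\boldsymbol y)$ lie in $[\sigma_{\min},\sigma_{\max}]$ for all $\boldsymbol x,\boldsymbol y$; (A4) $\|\boldsymbol\psi_i\|_{W^{1,\infty}(D_{\rm ref})}<\infty$ and $\sum_i\|\boldsymbol\psi_i\|_{W^{1,\infty}(D_{\rm ref})}<\infty$. Define $b_i:=\frac1{\sqrt6}\|\boldsymbol\psi_i\|_{W^{1,\infty}(D_{\rm ref})}$, $\xi_{\boldsymbol b}:=\sum_ib_i$. *)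

theory Defs
  imports "HOL-Analysis.Analysis" "HOL-Probability.Essential_Supremum" "HOL-Combinatorics.Stirling"
begin

definition lipschitz_domain :: "(real^'n) set \<Rightarrow> bool" where
  "lipschitz_domain D \<longleftrightarrow> open D \<and> connected D \<and> D \<noteq> {} \<and>
     (\<forall>p\<in>frontier D. \<exists>r>0. \<exists>(Q::real^'n \<Rightarrow> real^'n) (k::'n) (g::real^'n \<Rightarrow> real) (L::real).
        orthogonal_transformation Q \<and> L-lipschitz_on UNIV g \<and>
        (\<forall>x t. g (\<chi> i. if i = k then t else x $ i) = g x) \<and>
        D \<inter> ball p r = {x \<in> ball p r. (Q x) $ k < g (Q x)})"

text \<open>f is C^2 on the closure of the open set S (derivatives up to order 2 exist on S and
  extend continuously to closure S, since they are uniformly continuous on S) with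
  C^2 norm bounded by C.\<close>
definition C2_bounded_on :: "('a::euclidean_space \<Rightarrow> 'b::euclidean_space) \<Rightarrow> 'a set \<Rightarrow> real \<Rightarrow> bool" where
  "C2_bounded_on f S C \<longleftrightarrow> continuous_on (closure S) f \<and> (\<forall>x\<in>closure S. norm (f x) \<le> C) \<and>
     (\<exists>(f'::'a \<Rightarrow> 'a \<Rightarrow>\<^sub>L 'b) (f''::'a \<Rightarrow> 'a \<Rightarrow>\<^sub>L ('a \<Rightarrow>\<^sub>L 'b)).
        (\<forall>x\<in>S. (f has_derivative blinfun_apply (f' x)) (at x)) \<and>
        (\<forall>x\<in>S. (f' has_derivative blinfun_apply (f'' x)) (at x)) \<and>
        uniformly_continuous_on S f' \<and> uniformly_continuous_on S f'' \<and>
        (\<forall>x\<in>S. norm (f' x) \<le> C \<and> norm (f'' x) \<le> C))"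

definition singular_value :: "real^'n^'n \<Rightarrow> real \<Rightarrow> bool" where
  "singular_value A s \<longleftrightarrow> s \<ge> 0 \<and> (\<exists>v. v \<noteq> 0 \<and> (transpose A ** A) *v v = (s\<^sup>2) *\<^sub>R v)"

definition spec_norm :: "real^'n^'m \<Rightarrow> real" where
  "spec_norm A = onorm (\<lambda>v. A *v v)"

definition Linf_on :: "(real^'n) set \<Rightarrow> (real^'n \<Rightarrow> real) \<Rightarrow> ereal" where
  "Linf_on D f = esssup (lebesgue_on D) (\<lambda>x. ereal (f x))"

definition W1inf :: "(real^'n) set \<Rightarrow> (real^'n \<Rightarrow> real^'n) \<Rightarrow> ereal" where
  "W1inf D f = max (Linf_on D (\<lambda>x. norm (f x))) (Linf_on D (\<lambda>x. spec_norm (jacobian f (at x))))"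

definition mi_supp :: "(nat \<Rightarrow> nat) \<Rightarrow> nat set" where
  "mi_supp \<nu> = {j. \<nu> j \<noteq> 0}"

definition mi_abs :: "(nat \<Rightarrow> nat) \<Rightarrow> nat" where
  "mi_abs \<nu> = (\<Sum>j\<in>mi_supp \<nu>. \<nu> j)"

definition mi_pow :: "(nat \<Rightarrow> real) \<Rightarrow> (nat \<Rightarrow> nat) \<Rightarrow> real" where
  "mi_pow b \<nu> = (\<Prod>j\<in>mi_supp \<nu>. b j ^ \<nu> j)"

definition pderiv_coord :: "nat \<Rightarrow> ((nat \<Rightarrow> real) \<Rightarrow> real) \<Rightarrow> (nat \<Rightarrow> real) \<Rightarrow> real" where
  "pderiv_coord j f y = deriv (\<lambda>t. f (y(j := t))) (y j)"

definition pderiv_multi :: "(nat \<Rightarrow> nat) \<Rightarrow> ((nat \<Rightarrow> real) \<Rightarrow> real) \<Rightarrow> (nat \<Rightarrow> real) \<Rightarrow> real" where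
  "pderiv_multi \<nu> f = foldr (\<lambda>j g. (pderiv_coord j ^^ \<nu> j) g) (sorted_list_of_set (mi_supp \<nu>)) f"

text \<open>The domain mapping V, its Jacobian J and the coefficients b_i (indices start at 0).\<close>
definition Vmap :: "(nat \<Rightarrow> real^'n \<Rightarrow> real^'n) \<Rightarrow> real^'n \<Rightarrow> (nat \<Rightarrow> real) \<Rightarrow> real^'n" where
  "Vmap psi x y = x + (1 / sqrt 6) *\<^sub>R (\<Sum>i. sin (2 * pi * y i) *\<^sub>R psi i x)"

definition Jmat :: "(nat \<Rightarrow> real^'n \<Rightarrow> real^'n) \<Rightarrow> real^'n \<Rightarrow> (nat \<Rightarrow> real) \<Rightarrow> real^'n^'n" where
  "Jmat psi x y = mat 1 + (1 / sqrt 6) *\<^sub>R (\<Sum>i. sin (2 * pi * y i) *\<^sub>R jacobian (psi i) (at x))"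

definition bcoef :: "(real^'n) set \<Rightarrow> (nat \<Rightarrow> real^'n \<Rightarrow> real^'n) \<Rightarrow> nat \<Rightarrow> real" where
  "bcoef D psi i = real_of_ereal (W1inf D (psi i)) / sqrt 6"

end

theory Submission
  imports Defs
begin


datatype 'n fst = Full 'n | Sing 'n nat nat | Zero

definition trig :: "nat \<Rightarrow> real \<Rightarrow> real" where
  "trig a x = sin (x + real a * pi / 2)"

lemma trig_deriv: "((\<lambda>t. trig a (2*pi*t)) has_real_derivative (2*pi) * trig (Suc a) (2*pi*t0)) (at t0)"
proof -
  have "((\<lambda>t. sin (2*pi*t + real a * pi / 2)) has_real_derivative cos (2*pi*t0 + real a * pi / 2) * (2*pi)) (at t0)"
    by (auto intro!: derivative_eq_intros)
  moreover have "cos (2*pi*t0 + real a * pi / 2) = trig (Suc a) (2*pi*t0)"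
    unfolding trig_def by (simp add: distrib_right add_divide_distrib sin_add algebra_simps)
  ultimately show ?thesis unfolding trig_def by (simp add: mult.commute)
qed

lemma trig_bound: "\<bar>trig a x\<bar> \<le> 1"
  unfolding trig_def by simp

definition Efun :: "('n \<Rightarrow> 'n \<Rightarrow> nat \<Rightarrow> real) \<Rightarrow> 'n \<Rightarrow> 'n \<Rightarrow> (nat \<Rightarrow> real) \<Rightarrow> real" where
  "Efun \<alpha> k l z = (if k = l then 1 else 0) + (\<Sum>i. sin (2*pi*z i) * \<alpha> k l i)"

definition fval :: "('n \<Rightarrow> 'n \<Rightarrow> nat \<Rightarrow> real) \<Rightarrow> 'n \<Rightarrow> 'n fst \<Rightarrow> (nat \<Rightarrow> real) \<Rightarrow> real" where
  "fval \<alpha> k s z = (case s of Full l \<Rightarrow> Efun \<alpha> k l z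
      | Sing l j a \<Rightarrow> \<alpha> k l j * (2*pi)^a * trig a (2*pi*z j) | Zero \<Rightarrow> 0)"

definition dj :: "nat \<Rightarrow> 'n fst \<Rightarrow> 'n fst" where
  "dj j s = (case s of Full l \<Rightarrow> Sing l j 1
      | Sing l j' a \<Rightarrow> (if j' = j then Sing l j (Suc a) else Zero) | Zero \<Rightarrow> Zero)"

lemma Efun_upd:
  assumes b: "summable b" and ab: "\<And>i. \<bar>\<alpha> k l i\<bar> \<le> b i"
  shows "Efun \<alpha> k l (z(j:=t)) = (Efun \<alpha> k l z - sin (2*pi*z j) * \<alpha> k l j) + sin (2*pi*t) * \<alpha> k l j"
proof -
  have sm: "summable (\<lambda>i. sin (2*pi*w i) * \<alpha> k l i)" for w
    by (rule summable_comparison_test'[OF b, of 0]) (auto simp: abs_mult intro: order.trans[OF mult_left_le_one_le] ab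
          mult_le_one abs_sin_le_one order.trans[OF _ ab] mult_left_le_one_le)
  have "(\<lambda>i. sin (2*pi*(z(j:=t)) i) * \<alpha> k l i) = (\<lambda>i. (sin (2*pi*z i) * \<alpha> k l i - (if i = j then sin (2*pi*z j) * \<alpha> k l j else 0)) + (if i = j then sin (2*pi*t) * \<alpha> k l j else 0))"
    by auto
  moreover have "(\<lambda>i. (sin (2*pi*z i) * \<alpha> k l i - (if i = j then sin (2*pi*z j) * \<alpha> k l j else 0)) + (if i = j then sin (2*pi*t) * \<alpha> k l j else 0))
     sums ((\<Sum>i. sin (2*pi*z i) * \<alpha> k l i) - sin (2*pi*z j) * \<alpha> k l j + sin (2*pi*t) * \<alpha> k l j)"
    by (intro sums_add sums_diff summable_sums[OF sm])
       (rule sums_single[of j "\<lambda>_. sin (2*pi*z j) * \<alpha> k l j", simplified],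
        rule sums_single[of j "\<lambda>_. sin (2*pi*t) * \<alpha> k l j", simplified])
  ultimately show ?thesis unfolding Efun_def by (simp add: sums_unique[symmetric])
qed

lemma fval_deriv:
  assumes b: "summable b" and ab: "\<And>k l i. \<bar>\<alpha> k l i\<bar> \<le> b i"
  shows "((\<lambda>t. fval \<alpha> k s (z(j:=t))) has_real_derivative fval \<alpha> k (dj j s) (z(j:=t0))) (at t0)"
proof (cases s)
  case (Full l)
  have e: "(\<lambda>t. fval \<alpha> k s (z(j:=t))) = (\<lambda>t. (Efun \<alpha> k l z - sin (2*pi*z j) * \<alpha> k l j) + sin (2*pi*t) * \<alpha> k l j)"
  proof -
    have "Efun \<alpha> k l (z(j:=t)) = (Efun \<alpha> k l z - sin (2*pi*z j) * \<alpha> k l j) + sin (2*pi*t) * \<alpha> k l j" for t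
      by (rule Efun_upd[OF b ab])
    then show ?thesis by (simp add: fval_def Full)
  qed
  have "((\<lambda>t. (Efun \<alpha> k l z - sin (2*pi*z j) * \<alpha> k l j) + sin (2*pi*t) * \<alpha> k l j) has_real_derivative
      cos (2*pi*t0) * (2*pi) * \<alpha> k l j) (at t0)"
    by (auto intro!: derivative_eq_intros)
  moreover have "cos (2*pi*t0) = trig 1 (2*pi*t0)" by (simp add: trig_def sin_add)
  ultimately show ?thesis unfolding e by (simp add: Full fval_def dj_def mult_ac)
next
  case (Sing l j' a)
  show ?thesis
  proof (cases "j' = j")
    case True
    have "((\<lambda>t. \<alpha> k l j * (2*pi)^a * trig a (2*pi*t)) has_real_derivative \<alpha> k l j * (2*pi)^a * ((2*pi) * trig (Suc a) (2*pi*t0))) (at t0)"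
      by (intro DERIV_cmult trig_deriv)
    then show ?thesis using True by (simp add: Sing fval_def dj_def mult_ac)
  next
    case False
    then show ?thesis by (simp add: Sing fval_def dj_def)
  qed
next
  case Zero
  then show ?thesis by (simp add: fval_def dj_def)
qed


definition ks :: "'n::finite list" where "ks = (SOME xs. distinct xs \<and> set xs = UNIV)"

lemma ks: "distinct (ks::'n::finite list)" "set (ks::'n list) = UNIV"
proof -
  have "\<exists>xs::'n list. distinct xs \<and> set xs = UNIV" using finite_distinct_list[of "UNIV::'n set"] by auto
  from someI_ex[OF this] show "distinct (ks::'n::finite list)" "set (ks::'n list) = UNIV" unfolding ks_def by auto
qed

type_synonym 'n trm = "real \<times> ('n \<Rightarrow> 'n fst)"

definition tval :: "('n \<Rightarrow> 'n \<Rightarrow> nat \<Rightarrow> real) \<Rightarrow> 'n::finite trm \<Rightarrow> (nat \<Rightarrow> real) \<Rightarrow> real" where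
  "tval \<alpha> t z = fst t * (\<Prod>k\<in>UNIV. fval \<alpha> k (snd t k) z)"

definition VV :: "('n \<Rightarrow> 'n \<Rightarrow> nat \<Rightarrow> real) \<Rightarrow> 'n::finite trm list \<Rightarrow> (nat \<Rightarrow> real) \<Rightarrow> real" where
  "VV \<alpha> L z = (\<Sum>t\<leftarrow>L. tval \<alpha> t z)"

definition Dt :: "nat \<Rightarrow> 'n::finite trm \<Rightarrow> 'n trm list" where
  "Dt j t = map (\<lambda>k. (fst t, (snd t)(k := dj j (snd t k)))) ks"

definition DL :: "nat \<Rightarrow> 'n::finite trm list \<Rightarrow> 'n trm list" where
  "DL j L = concat (map (Dt j) L)"

lemma DL_simps[simp]: "DL j [] = []" "DL j (t # L) = Dt j t @ DL j L" "DL j (L1 @ L2) = DL j L1 @ DL j L2"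
  by (simp_all add: DL_def)

lemma VV_simps[simp]: "VV \<alpha> [] z = 0" "VV \<alpha> (t # L) z = tval \<alpha> t z + VV \<alpha> L z" "VV \<alpha> (L1 @ L2) z = VV \<alpha> L1 z + VV \<alpha> L2 z"
  by (simp_all add: VV_def)

lemma VV_Dt: "VV \<alpha> (Dt j t) z = (\<Sum>k\<in>UNIV. fst t * (fval \<alpha> k (dj j (snd t k)) z * (\<Prod>k'\<in>UNIV-{k}. fval \<alpha> k' (snd t k') z)))"
proof -
  have "VV \<alpha> (Dt j t) z = (\<Sum>k\<in>set ks. tval \<alpha> (fst t, (snd t)(k := dj j (snd t k))) z)"
    unfolding VV_def Dt_def by (simp add: sum_list_distinct_conv_sum_set[OF ks(1)] o_def)
  also have "\<dots> = (\<Sum>k\<in>UNIV. fst t * (fval \<alpha> k (dj j (snd t k)) z * (\<Prod>k'\<in>UNIV-{k}. fval \<alpha> k' (snd t k') z)))"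
    unfolding ks(2) tval_def
  proof (intro sum.cong refl)
    fix k :: 'a
    have "(\<Prod>k'\<in>UNIV. fval \<alpha> k' (((snd t)(k := dj j (snd t k))) k') z)
      = fval \<alpha> k (dj j (snd t k)) z * (\<Prod>k'\<in>UNIV-{k}. fval \<alpha> k' (((snd t)(k := dj j (snd t k))) k') z)"
      by (subst prod.remove[of _ k]) auto
    also have "(\<Prod>k'\<in>UNIV-{k}. fval \<alpha> k' (((snd t)(k := dj j (snd t k))) k') z) = (\<Prod>k'\<in>UNIV-{k}. fval \<alpha> k' (snd t k') z)"
      by (intro prod.cong) auto
    finally show "fst (fst t, (snd t)(k := dj j (snd t k))) * (\<Prod>k'\<in>UNIV. fval \<alpha> k' (snd (fst t, (snd t)(k := dj j (snd t k))) k') z)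
       = fst t * (fval \<alpha> k (dj j (snd t k)) z * (\<Prod>k'\<in>UNIV-{k}. fval \<alpha> k' (snd t k') z))" by simp
  qed
  finally show ?thesis .
qed

lemma tval_deriv:
  assumes b: "summable b" and ab: "\<And>k l i. \<bar>\<alpha> k l i\<bar> \<le> b i"
  shows "((\<lambda>u. tval \<alpha> t (z(j:=u))) has_real_derivative VV \<alpha> (Dt j t) (z(j:=uu))) (at uu)"
proof -
  have "((\<lambda>u. \<Prod>k\<in>UNIV. fval \<alpha> k (snd t k) (z(j:=u))) has_real_derivative
     (\<Sum>k\<in>UNIV. fval \<alpha> k (dj j (snd t k)) (z(j:=uu)) * (\<Prod>k'\<in>UNIV-{k}. fval \<alpha> k' (snd t k') (z(j:=uu))))) (at uu)"
    by (rule has_field_derivative_prod[where f="\<lambda>k u. fval \<alpha> k (snd t k) (z(j:=u))", simplified])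
       (rule fval_deriv[OF b ab])
  then have "((\<lambda>u. fst t * (\<Prod>k\<in>UNIV. fval \<alpha> k (snd t k) (z(j:=u)))) has_real_derivative
     fst t * (\<Sum>k\<in>UNIV. fval \<alpha> k (dj j (snd t k)) (z(j:=uu)) * (\<Prod>k'\<in>UNIV-{k}. fval \<alpha> k' (snd t k') (z(j:=uu))))) (at uu)"
    by (rule DERIV_cmult)
  then show ?thesis unfolding tval_def VV_Dt by (simp add: sum_distrib_left)
qed

lemma VV_deriv:
  assumes b: "summable b" and ab: "\<And>k l i. \<bar>\<alpha> k l i\<bar> \<le> b i"
  shows "((\<lambda>u. VV \<alpha> L (z(j:=u))) has_real_derivative VV \<alpha> (DL j L) (z(j:=uu))) (at uu)"
proof (induction L)
  case Nil
  then show ?case by simp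
next
  case (Cons t L)
  show ?case unfolding VV_simps DL_simps by (intro DERIV_add tval_deriv[OF b ab] Cons)
qed

lemma pderiv_VV:
  assumes b: "summable b" and ab: "\<And>k l i. \<bar>\<alpha> k l i\<bar> \<le> b i"
  shows "pderiv_coord j (VV \<alpha> L) = VV \<alpha> (DL j L)"
proof
  fix z
  show "pderiv_coord j (VV \<alpha> L) z = VV \<alpha> (DL j L) z"
    unfolding pderiv_coord_def using DERIV_imp_deriv[OF VV_deriv[OF b ab, where L=L and z=z and j=j and uu="z j"]] by simp
qed

definition Dmulti :: "(nat \<Rightarrow> nat) \<Rightarrow> 'n::finite trm list \<Rightarrow> 'n trm list" where
  "Dmulti \<nu> L = foldr (\<lambda>j L. (DL j ^^ \<nu> j) L) (sorted_list_of_set (mi_supp \<nu>)) L"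

lemma pderiv_multi_VV:
  assumes b: "summable b" and ab: "\<And>k l i. \<bar>\<alpha> k l i\<bar> \<le> b i"
  shows "pderiv_multi \<nu> (VV \<alpha> L) = VV \<alpha> (Dmulti \<nu> L)"
proof -
  have pw: "(pderiv_coord j ^^ n) (VV \<alpha> L') = VV \<alpha> ((DL j ^^ n) L')" for j n L'
    by (induction n) (simp_all add: pderiv_VV[OF b ab])
  have "foldr (\<lambda>j g. (pderiv_coord j ^^ \<nu> j) g) js (VV \<alpha> L) = VV \<alpha> (foldr (\<lambda>j L. (DL j ^^ \<nu> j) L) js L)" for js
    by (induction js) (simp_all add: pw)
  then show ?thesis unfolding pderiv_multi_def Dmulti_def by simp
qed


definition beta :: "(nat \<Rightarrow> real) \<Rightarrow> real \<Rightarrow> 'n fst \<Rightarrow> real" where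
  "beta b \<xi> s = (case s of Full l \<Rightarrow> 1 + \<xi> | Sing l j a \<Rightarrow> (2*pi)^a * b j | Zero \<Rightarrow> 0)"

definition isF :: "'n fst \<Rightarrow> bool" where "isF s = (case s of Full _ \<Rightarrow> True | _ \<Rightarrow> False)"
definition isSj :: "nat \<Rightarrow> 'n fst \<Rightarrow> bool" where "isSj j s = (case s of Sing _ j' _ \<Rightarrow> j' = j | _ \<Rightarrow> False)"

lemma isF_simps[simp]: "isF (Full l) = True" "isF (Sing l j a) = False" "isF Zero = False"
  by (simp_all add: isF_def)
lemma isSj_simps[simp]: "isSj j (Full l) = False" "isSj j (Sing l j' a) = (j' = j)" "isSj j Zero = False"
  by (simp_all add: isSj_def)
lemma dj_simps[simp]: "dj j (Full l) = Sing l j 1" "dj j (Sing l j' a) = (if j' = j then Sing l j (Suc a) else Zero)" "dj j Zero = Zero"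
  by (simp_all add: dj_def)
lemma beta_simps[simp]: "beta b \<xi> (Full l) = 1 + \<xi>" "beta b \<xi> (Sing l j a) = (2*pi)^a * b j" "beta b \<xi> Zero = 0"
  by (simp_all add: beta_def)
lemma F_not_Sj: "isF s \<Longrightarrow> \<not> isSj j s" by (cases s) auto

definition PN :: "(nat \<Rightarrow> real) \<Rightarrow> real \<Rightarrow> ('n::finite \<Rightarrow> 'n fst) \<Rightarrow> real" where
  "PN b \<xi> st = (\<Prod>k\<in>{k. \<not> isF (st k)}. beta b \<xi> (st k))"

definition Psij :: "(nat \<Rightarrow> real) \<Rightarrow> real \<Rightarrow> nat \<Rightarrow> (nat \<Rightarrow> real) \<Rightarrow> ('n::finite \<Rightarrow> 'n fst) \<Rightarrow> real" where
  "Psij b \<xi> j h st = PN b \<xi> st * h (card {k. isSj j (st k)})"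

definition rr :: "nat \<Rightarrow> ('n::finite \<Rightarrow> 'n fst) \<Rightarrow> nat" where
  "rr j st = card {k. isF (st k) \<or> isSj j (st k)}"

definition Top :: "(nat \<Rightarrow> real) \<Rightarrow> nat \<Rightarrow> nat \<Rightarrow> (nat \<Rightarrow> real) \<Rightarrow> nat \<Rightarrow> real" where
  "Top b j r h m = 2*pi*(real m * h m + real (r - m) * b j * h (Suc m))"

definition WjL :: "(nat \<Rightarrow> real) \<Rightarrow> real \<Rightarrow> nat \<Rightarrow> (nat \<Rightarrow> real) \<Rightarrow> 'n::finite trm list \<Rightarrow> real" where
  "WjL b \<xi> j h L = (\<Sum>t\<leftarrow>L. \<bar>fst t\<bar> * Psij b \<xi> j h (snd t))"

lemma WjL_simps[simp]: "WjL b \<xi> j h [] = 0" "WjL b \<xi> j h (t # L) = \<bar>fst t\<bar> * Psij b \<xi> j h (snd t) + WjL b \<xi> j h L"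
  "WjL b \<xi> j h (L1 @ L2) = WjL b \<xi> j h L1 + WjL b \<xi> j h L2"
  by (simp_all add: WjL_def)

lemma sum_if2:
  fixes A B :: real
  shows "(\<Sum>k\<in>(UNIV::'n::finite set). if p k then A else if q k then B else 0)
    = real (card {k. p k}) * A + real (card {k. q k \<and> \<not> p k}) * B"
proof -
  have "(\<Sum>k\<in>(UNIV::'n set). if p k then A else if q k then B else 0)
     = (\<Sum>k\<in>{k. p k}. A) + (\<Sum>k\<in>{k. \<not> p k}. if q k then B else 0)"
    by (subst sum.If_cases) (auto simp: Compl_eq)
  also have "(\<Sum>k\<in>{k. \<not> p k}. if q k then B else 0) = (\<Sum>k\<in>{k. \<not> p k} \<inter> {k. q k}. B)"
    by (subst sum.If_cases) auto
  also have "{k. \<not> p k} \<inter> {k. q k} = {k. q k \<and> \<not> p k}" by auto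
  finally show ?thesis by simp
qed

lemma Psij_step:
  fixes st :: "'n::finite \<Rightarrow> 'n fst"
  shows "Psij b \<xi> j h (st(k := dj j (st k))) =
    (if isF (st k) then PN b \<xi> st * (2*pi*b j) * h (Suc (card {k. isSj j (st k)}))
     else if isSj j (st k) then PN b \<xi> st * (2*pi) * h (card {k. isSj j (st k)}) else 0)"
proof (cases "st k")
  case (Full l)
  have nf: "{k'. \<not> isF ((st(k := dj j (st k))) k')} = insert k {k'. \<not> isF (st k')}"
    using Full by (auto simp: )
  have sj: "{k'. isSj j ((st(k := dj j (st k))) k')} = insert k {k'. isSj j (st k')}"
    using Full by (auto simp: )
  have "PN b \<xi> (st(k := dj j (st k))) = beta b \<xi> (Sing l j 1) * (\<Prod>k'\<in>{k. \<not> isF (st k)}. beta b \<xi> ((st(k := dj j (st k))) k'))"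
    unfolding PN_def nf using Full by (subst prod.insert) auto
  also have "(\<Prod>k'\<in>{k. \<not> isF (st k)}. beta b \<xi> ((st(k := dj j (st k))) k')) = PN b \<xi> st"
    unfolding PN_def using Full by (intro prod.cong) auto
  also have "beta b \<xi> (Sing l j 1) * PN b \<xi> st = PN b \<xi> st * (2*pi*b j)" by (simp add: beta_def)
  finally have "PN b \<xi> (st(k := dj j (st k))) = PN b \<xi> st * (2*pi*b j)" .
  moreover have "card {k'. isSj j ((st(k := dj j (st k))) k')} = Suc (card {k. isSj j (st k)})"
    unfolding sj using Full by (subst card_insert_disjoint) auto
  ultimately show ?thesis using Full by (simp add: Psij_def)
next
  case (Sing l j' a)
  show ?thesis
  proof (cases "j' = j")
    case True
    have nf: "{k'. \<not> isF ((st(k := dj j (st k))) k')} = {k'. \<not> isF (st k')}"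
      using Sing True by (auto simp: )
    have sj: "{k'. isSj j ((st(k := dj j (st k))) k')} = {k'. isSj j (st k')}"
      using Sing True by (auto simp: )
    have kin: "k \<in> {k'. \<not> isF (st k')}" using Sing by simp
    define R where "R = (\<Prod>k'\<in>{k. \<not> isF (st k)} - {k}. beta b \<xi> (st k'))"
    have e1: "PN b \<xi> (st(k := dj j (st k))) = beta b \<xi> (Sing l j (Suc a)) * (\<Prod>k'\<in>{k. \<not> isF (st k)} - {k}. beta b \<xi> ((st(k := dj j (st k))) k'))"
      unfolding PN_def nf using Sing True kin by (subst prod.remove[OF _ kin]) auto
    have e2: "(\<Prod>k'\<in>{k. \<not> isF (st k)} - {k}. beta b \<xi> ((st(k := dj j (st k))) k')) = R"
      unfolding R_def by (intro prod.cong) auto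
    have e3: "PN b \<xi> st = beta b \<xi> (Sing l j a) * R"
      unfolding PN_def R_def using Sing True by (subst prod.remove[OF _ kin]) auto
    have "PN b \<xi> (st(k := dj j (st k))) = PN b \<xi> st * (2*pi)"
      unfolding e1 e2 e3 beta_simps by (simp add: algebra_simps)
    then show ?thesis unfolding Psij_def sj using Sing True by simp
  next
    case False
    have kin: "k \<in> {k'. \<not> isF ((st(k := dj j (st k))) k')}" using Sing False by simp
    have "PN b \<xi> (st(k := dj j (st k))) = 0"
      unfolding PN_def using Sing False kin by (intro prod_zero) (auto intro!: bexI[OF _ kin] simp: beta_def)
    then show ?thesis using Sing False by (simp add: Psij_def)
  qed
next
  case Zero
  have kin: "k \<in> {k'. \<not> isF ((st(k := dj j (st k))) k')}" using Zero by simp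
  have "PN b \<xi> (st(k := dj j (st k))) = 0"
    unfolding PN_def using Zero kin by (intro prod_zero) (auto intro!: bexI[OF _ kin] simp: beta_def)
  then show ?thesis using Zero by (simp add: Psij_def)
qed

lemma rr_step: "rr j ((st::'n::finite \<Rightarrow> 'n fst)(k := dj j (st k))) = rr j st"
proof -
  have "{k'. isF ((st(k := dj j (st k))) k') \<or> isSj j ((st(k := dj j (st k))) k')} = {k'. isF (st k') \<or> isSj j (st k')}"
  proof (intro Collect_cong)
    fix k'
    show "(isF ((st(k := dj j (st k))) k') \<or> isSj j ((st(k := dj j (st k))) k')) = (isF (st k') \<or> isSj j (st k'))"
      by (cases "k' = k"; cases "st k'") auto
  qed
  then show ?thesis by (simp add: rr_def)
qed

lemma card_F_Sj: "card {k. isF ((st::'n::finite \<Rightarrow> 'n fst) k)} = rr j st - card {k. isSj j (st k)}"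
proof -
  have "{k. isF (st k) \<or> isSj j (st k)} = {k. isF (st k)} \<union> {k. isSj j (st k)}" by auto
  moreover have "{k. isF (st k)} \<inter> {k. isSj j (st k)} = {}" by (auto dest: F_not_Sj)
  ultimately have "rr j st = card {k. isF (st k)} + card {k. isSj j (st k)}"
    unfolding rr_def by (simp add: card_Un_disjoint)
  then show ?thesis by simp
qed

lemma WjL_Dt:
  "WjL b \<xi> j h (Dt j t) = \<bar>fst t\<bar> * Psij b \<xi> j (Top b j (rr j (snd t)) h) (snd t)"
proof -
  obtain c st where t: "t = (c, st)" by (cases t)
  let ?m = "card {k. isSj j (st k)}"
  have "WjL b \<xi> j h (Dt j t) = (\<Sum>k\<in>UNIV. \<bar>c\<bar> * Psij b \<xi> j h (st(k := dj j (st k))))"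
    unfolding WjL_def Dt_def t by (simp add: sum_list_distinct_conv_sum_set[OF ks(1)] o_def ks(2))
  also have "\<dots> = \<bar>c\<bar> * (\<Sum>k\<in>UNIV. if isF (st k) then PN b \<xi> st * (2*pi*b j) * h (Suc ?m)
     else if isSj j (st k) then PN b \<xi> st * (2*pi) * h ?m else 0)"
    by (simp add: Psij_step sum_distrib_left)
  also have "\<dots> = \<bar>c\<bar> * (real (card {k. isF (st k)}) * (PN b \<xi> st * (2*pi*b j) * h (Suc ?m))
     + real (card {k. isSj j (st k) \<and> \<not> isF (st k)}) * (PN b \<xi> st * (2*pi) * h ?m))"
    by (simp only: sum_if2)
  also have "{k. isSj j (st k) \<and> \<not> isF (st k)} = {k. isSj j (st k)}" by (auto dest: F_not_Sj)
  also have "\<bar>c\<bar> * (real (card {k. isF (st k)}) * (PN b \<xi> st * (2*pi*b j) * h (Suc ?m))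
     + real ?m * (PN b \<xi> st * (2*pi) * h ?m)) = \<bar>c\<bar> * Psij b \<xi> j (Top b j (rr j st) h) st"
    unfolding Psij_def Top_def card_F_Sj[of st j] by (simp add: algebra_simps)
  finally show ?thesis by (simp add: t)
qed

lemma rr_Dt: "t' \<in> set (Dt j t) \<Longrightarrow> rr j (snd t') = rr j (snd t)"
  by (auto simp: Dt_def rr_step)

lemma WjL_DL:
  assumes "\<forall>t\<in>set L. rr j (snd t) = r"
  shows "WjL b \<xi> j h (DL j L) = WjL b \<xi> j (Top b j r h) L"
  using assms by (induction L) (simp_all add: WjL_Dt)

lemma rr_DL: "\<forall>t\<in>set L. rr j (snd t) = r \<Longrightarrow> \<forall>t\<in>set (DL j L). rr j (snd t) = r"
  by (auto simp: DL_def dest: rr_Dt)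

lemma WjL_DL_pow:
  assumes "\<forall>t\<in>set L. rr j (snd t) = r"
  shows "WjL b \<xi> j h ((DL j ^^ n) L) = WjL b \<xi> j ((Top b j r ^^ n) h) L"
  using assms
proof (induction n arbitrary: h L)
  case 0
  then show ?case by simp
next
  case (Suc n)
  have "WjL b \<xi> j h ((DL j ^^ Suc n) L) = WjL b \<xi> j h ((DL j ^^ n) (DL j L))"
    by (simp only: funpow_Suc_right o_def)
  also have "\<dots> = WjL b \<xi> j ((Top b j r ^^ n) h) (DL j L)"
    using Suc.IH rr_DL[OF Suc.prems] by blast
  also have "\<dots> = WjL b \<xi> j (Top b j r ((Top b j r ^^ n) h)) L"
    using WjL_DL[OF Suc.prems] by blast
  finally show ?case by (simp only: funpow_Suc_right o_def funpow_swap1)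
qed


fun ff :: "nat \<Rightarrow> nat \<Rightarrow> nat" where
  "ff r 0 = 1" | "ff r (Suc m) = ff r m * (r - m)"

lemma ff_mult: "ff r a * ff (r - a) m = ff r (a + m)"
  by (induction m) (simp_all add: diff_diff_add)

lemma Top_pow:
  "(Top b j r ^^ n) h 0 = (2*pi)^n * (\<Sum>m\<le>n. real (ff r m) * real (Stirling n m) * b j ^ m * h m)"
proof (induction n arbitrary: h)
  case 0
  then show ?case by simp
next
  case (Suc n)
  define A where "A m = real (ff r m) * real m * real (Stirling n m) * b j ^ m * h m" for m
  define B where "B m = real (ff r (Suc m)) * real (Stirling n m) * b j ^ Suc m * h (Suc m)" for m
  have "(Top b j r ^^ Suc n) h 0 = (Top b j r ^^ n) (Top b j r h) 0"
    by (simp only: funpow_Suc_right o_def)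
  also have "\<dots> = (2*pi)^n * (\<Sum>m\<le>n. real (ff r m) * real (Stirling n m) * b j ^ m * Top b j r h m)"
    by (rule Suc.IH)
  also have "(\<Sum>m\<le>n. real (ff r m) * real (Stirling n m) * b j ^ m * Top b j r h m) = 2*pi * (\<Sum>m\<le>n. A m + B m)"
    unfolding sum_distrib_left
  proof (intro sum.cong refl)
    fix m
    have "real (ff r m) * real (r - m) = real (ff r (Suc m))" by simp
    then show "real (ff r m) * real (Stirling n m) * b j ^ m * Top b j r h m = 2 * pi * (A m + B m)"
      unfolding A_def B_def Top_def by (simp add: algebra_simps)
  qed
  also have "(\<Sum>m\<le>n. A m + B m) = (\<Sum>m\<le>Suc n. real (ff r m) * real (Stirling (Suc n) m) * b j ^ m * h m)"
  proof -
    have A0: "A 0 = 0" by (simp add: A_def)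
    have A1: "A (Suc n) = 0" by (simp add: A_def)
    have sA: "(\<Sum>m\<le>n. A (Suc m)) = (\<Sum>m\<le>n. A m)"
      using sum.atMost_Suc_shift[of A n] sum.atMost_Suc[of A n] A0 A1 by simp
    have "(\<Sum>m\<le>Suc n. real (ff r m) * real (Stirling (Suc n) m) * b j ^ m * h m)
       = (\<Sum>m\<le>n. real (ff r (Suc m)) * real (Stirling (Suc n) (Suc m)) * b j ^ Suc m * h (Suc m))"
      by (subst sum.atMost_Suc_shift) simp
    also have "\<dots> = (\<Sum>m\<le>n. A (Suc m) + B m)"
      by (intro sum.cong refl) (simp add: A_def B_def algebra_simps)
    also have "\<dots> = (\<Sum>m\<le>n. A m + B m)" by (simp add: sum.distrib sA)
    finally show ?thesis by simp
  qed
  finally show ?case by simp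
qed


definition Gstep :: "(nat \<Rightarrow> real) \<Rightarrow> nat \<Rightarrow> nat \<Rightarrow> (nat \<Rightarrow> real) \<Rightarrow> nat \<Rightarrow> real" where
  "Gstep b j n g f = (2*pi)^n * (\<Sum>m\<le>n. real (ff f m) * real (Stirling n m) * b j ^ m * g (f - m))"

definition Psi :: "(nat \<Rightarrow> real) \<Rightarrow> real \<Rightarrow> (nat \<Rightarrow> real) \<Rightarrow> ('n::finite \<Rightarrow> 'n fst) \<Rightarrow> real" where
  "Psi b \<xi> g st = PN b \<xi> st * g (card {k. isF (st k)})"

definition WL :: "(nat \<Rightarrow> real) \<Rightarrow> real \<Rightarrow> (nat \<Rightarrow> real) \<Rightarrow> 'n::finite trm list \<Rightarrow> real" where
  "WL b \<xi> g L = (\<Sum>t\<leftarrow>L. \<bar>fst t\<bar> * Psi b \<xi> g (snd t))"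

lemma WL_simps[simp]: "WL b \<xi> g [] = 0" "WL b \<xi> g (t # L) = \<bar>fst t\<bar> * Psi b \<xi> g (snd t) + WL b \<xi> g L"
  "WL b \<xi> g (L1 @ L2) = WL b \<xi> g L1 + WL b \<xi> g L2"
  by (simp_all add: WL_def)

definition noS :: "nat \<Rightarrow> 'n::finite trm list \<Rightarrow> bool" where
  "noS j L = (\<forall>t\<in>set L. \<forall>k. \<not> isSj j (snd t k))"

lemma DL_pow_append: "(DL j ^^ n) (A @ B) = (DL j ^^ n) A @ (DL j ^^ n) B"
  by (induction n) simp_all

lemma DL_pow_Cons: "(DL j ^^ n) (t # L) = (DL j ^^ n) [t] @ (DL j ^^ n) L"
  using DL_pow_append[where j=j and n=n and A="[t]" and B=L] by simp

lemma rr_DL_pow: assumes "\<forall>t\<in>set L. rr j (snd t) = r" shows "\<forall>t\<in>set ((DL j ^^ n) L). rr j (snd t) = r"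
proof (induction n)
  case 0 show ?case using assms by simp
next
  case (Suc n) show ?case unfolding funpow.simps o_apply by (rule rr_DL[OF Suc.IH])
qed

lemma WL_term:
  assumes nos: "\<forall>k. \<not> isSj j (snd t k)"
  shows "WL b \<xi> g ((DL j ^^ n) [t]) = \<bar>fst t\<bar> * Psi b \<xi> (Gstep b j n g) (snd t)"
proof -
  define r where "r = rr j (snd t)"
  define h where "h m = g (r - m)" for m
  have sj0: "{k. isSj j (snd t k)} = {}" using nos by auto
  have rF: "card {k. isF (snd t k)} = r" unfolding r_def using card_F_Sj[of "snd t" j] sj0 by simp
  have rrs: "\<forall>t'\<in>set ((DL j ^^ n) [t]). rr j (snd t') = r"
    by (rule rr_DL_pow) (simp add: r_def)
  have "WL b \<xi> g ((DL j ^^ n) [t]) = WjL b \<xi> j h ((DL j ^^ n) [t])"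
    unfolding WL_def WjL_def
  proof (intro arg_cong[where f=sum_list] map_cong refl)
    fix t' assume "t' \<in> set ((DL j ^^ n) [t])"
    then have "rr j (snd t') = r" using rrs by blast
    then show "\<bar>fst t'\<bar> * Psi b \<xi> g (snd t') = \<bar>fst t'\<bar> * Psij b \<xi> j h (snd t')"
      unfolding Psi_def Psij_def h_def using card_F_Sj[of "snd t'" j] by simp
  qed
  also have "\<dots> = WjL b \<xi> j ((Top b j r ^^ n) h) [t]"
    by (rule WjL_DL_pow) (simp add: r_def)
  also have "\<dots> = \<bar>fst t\<bar> * PN b \<xi> (snd t) * (Top b j r ^^ n) h 0"
    by (simp add: Psij_def sj0)
  also have "(Top b j r ^^ n) h 0 = Gstep b j n g r"
    unfolding Top_pow Gstep_def h_def by simp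
  finally show ?thesis unfolding Psi_def rF by simp
qed

lemma WL_DL_pow:
  assumes "noS j L"
  shows "WL b \<xi> g ((DL j ^^ n) L) = WL b \<xi> (Gstep b j n g) L"
  using assms
proof (induction L)
  case Nil
  have e: "(DL j ^^ n) [] = []" by (induction n) simp_all
  show ?case by (simp only: e WL_simps)
next
  case (Cons t L)
  then have n1: "\<forall>k. \<not> isSj j (snd t k)" and n2: "noS j L" by (auto simp: noS_def)
  show ?case by (subst DL_pow_Cons) (simp add: WL_term[OF n1] Cons.IH[OF n2])
qed

lemma noS_DL: assumes a: "noS i L" "i \<noteq> j" shows "noS i (DL j L)"
  unfolding noS_def
proof (intro ballI allI notI)
  fix t' k' assume t': "t' \<in> set (DL j L)" and s: "isSj i (snd t' k')"
  from t' obtain t k where t: "t \<in> set L" "t' = (fst t, (snd t)(k := dj j (snd t k)))"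
    by (auto simp: DL_def Dt_def)
  show False
  proof (cases "k' = k")
    case True then have "isSj i (dj j (snd t k))" using s t by simp
    then show False using a(2) by (cases "snd t k") (auto split: if_splits)
  next
    case False then have "isSj i (snd t k')" using s t by simp
    then show False using a(1) t unfolding noS_def by blast
  qed
qed

lemma noS_DL_pow: assumes "noS i L" "i \<noteq> j" shows "noS i ((DL j ^^ n) L)"
proof (induction n)
  case 0 show ?case using assms by simp
next
  case (Suc n) show ?case unfolding funpow.simps o_apply by (rule noS_DL[OF Suc.IH assms(2)])
qed

fun Gchain :: "(nat \<Rightarrow> real) \<Rightarrow> (nat \<Rightarrow> nat) \<Rightarrow> nat list \<Rightarrow> (nat \<Rightarrow> real) \<Rightarrow> nat \<Rightarrow> real" where
  "Gchain b \<nu> [] g = g"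
| "Gchain b \<nu> (j # js) g = Gchain b \<nu> js (Gstep b j (\<nu> j) g)"

lemma noS_foldr:
  assumes "noS i L" "i \<notin> set js"
  shows "noS i (foldr (\<lambda>j L. (DL j ^^ \<nu> j) L) js L)"
  using assms by (induction js) (auto intro: noS_DL_pow)

lemma WL_foldr:
  assumes "distinct js" "\<forall>i\<in>set js. noS i L"
  shows "WL b \<xi> g (foldr (\<lambda>j L. (DL j ^^ \<nu> j) L) js L) = WL b \<xi> (Gchain b \<nu> js g) L"
  using assms
proof (induction js arbitrary: g)
  case Nil
  then show ?case by simp
next
  case (Cons j js)
  have ns: "noS j (foldr (\<lambda>j L. (DL j ^^ \<nu> j) L) js L)"
    using Cons.prems by (intro noS_foldr) auto
  have "WL b \<xi> g (foldr (\<lambda>j L. (DL j ^^ \<nu> j) L) (j # js) L)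
     = WL b \<xi> (Gstep b j (\<nu> j) g) (foldr (\<lambda>j L. (DL j ^^ \<nu> j) L) js L)"
    by (simp add: WL_DL_pow[OF ns])
  also have "\<dots> = WL b \<xi> (Gchain b \<nu> js (Gstep b j (\<nu> j) g)) L"
    using Cons by simp
  finally show ?case by simp
qed


definition Wset :: "(nat \<Rightarrow> nat) \<Rightarrow> nat list \<Rightarrow> (nat \<Rightarrow> nat) set" where
  "Wset \<nu> js = {w. (\<forall>i\<in>set js. w i \<le> \<nu> i) \<and> (\<forall>i. i \<notin> set js \<longrightarrow> w i = 0)}"

definition wabs :: "nat list \<Rightarrow> (nat \<Rightarrow> nat) \<Rightarrow> nat" where
  "wabs js w = (\<Sum>i\<in>set js. w i)"

definition QQ :: "(nat \<Rightarrow> real) \<Rightarrow> (nat \<Rightarrow> nat) \<Rightarrow> nat list \<Rightarrow> (nat \<Rightarrow> nat) \<Rightarrow> real" where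
  "QQ b \<nu> js w = (\<Prod>i\<in>set js. real (Stirling (\<nu> i) (w i)) * b i ^ w i)"

lemma Wset_Cons:
  assumes j: "j \<notin> set js"
  shows "Wset \<nu> (j # js) = (\<lambda>(m, w). w(j := m)) ` ({..\<nu> j} \<times> Wset \<nu> js)"
    and "inj_on (\<lambda>(m, w). w(j := m)) ({..\<nu> j} \<times> Wset \<nu> js)"
proof -
  show "Wset \<nu> (j # js) = (\<lambda>(m, w). w(j := m)) ` ({..\<nu> j} \<times> Wset \<nu> js)"
  proof (intro equalityI subsetI)
    fix w' assume w': "w' \<in> Wset \<nu> (j # js)"
    have "w' = (\<lambda>(m, w). w(j := m)) (w' j, w'(j := 0))" by simp
    moreover have "(w' j, w'(j := 0)) \<in> {..\<nu> j} \<times> Wset \<nu> js"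
      using w' j by (auto simp: Wset_def)
    ultimately show "w' \<in> (\<lambda>(m, w). w(j := m)) ` ({..\<nu> j} \<times> Wset \<nu> js)" by blast
  next
    fix w' assume "w' \<in> (\<lambda>(m, w). w(j := m)) ` ({..\<nu> j} \<times> Wset \<nu> js)"
    then obtain m w where "m \<le> \<nu> j" "w \<in> Wset \<nu> js" "w' = w(j := m)" by auto
    then show "w' \<in> Wset \<nu> (j # js)" using j by (auto simp: Wset_def)
  qed
  show "inj_on (\<lambda>(m, w). w(j := m)) ({..\<nu> j} \<times> Wset \<nu> js)"
  proof (rule inj_onI, clarify)
    fix m w m' w' assume a: "w \<in> Wset \<nu> js" "w' \<in> Wset \<nu> js" "w(j := m) = w'(j := m')"
    then have "m = m'" by (metis fun_upd_same)
    moreover have "w = w'"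
    proof
      fix i show "w i = w' i"
      proof (cases "i = j")
        case True then show ?thesis using a j by (simp add: Wset_def)
      next
        case False then show ?thesis using fun_cong[OF a(3), of i] by simp
      qed
    qed
    ultimately show "m = m' \<and> w = w'" by simp
  qed
qed

lemma wabs_upd: "j \<notin> set js \<Longrightarrow> wabs (j # js) (w(j := m)) = m + wabs js w"
  unfolding wabs_def by (simp add: sum.insert) (intro sum.cong, auto)

lemma QQ_upd: "j \<notin> set js \<Longrightarrow> QQ b \<nu> (j # js) (w(j := m)) = real (Stirling (\<nu> j) m) * b j ^ m * QQ b \<nu> js w"
proof -
  assume j: "j \<notin> set js"
  have "QQ b \<nu> (j # js) (w(j := m)) = real (Stirling (\<nu> j) m) * b j ^ m * (\<Prod>i\<in>set js. real (Stirling (\<nu> i) ((w(j := m)) i)) * b i ^ (w(j := m)) i)"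
    unfolding QQ_def using j by (simp add: prod.insert)
  also have "(\<Prod>i\<in>set js. real (Stirling (\<nu> i) ((w(j := m)) i)) * b i ^ (w(j := m)) i) = QQ b \<nu> js w"
    unfolding QQ_def using j by (intro prod.cong) auto
  finally show ?thesis .
qed

lemma Gchain_closed:
  assumes "distinct js"
  shows "Gchain b \<nu> js g f = (2*pi)^(\<Sum>i\<in>set js. \<nu> i) *
    (\<Sum>w\<in>Wset \<nu> js. real (ff f (wabs js w)) * QQ b \<nu> js w * g (f - wabs js w))"
  using assms
proof (induction js arbitrary: g)
  case Nil
  have "Wset \<nu> [] = {\<lambda>_. 0}" by (auto simp: Wset_def)
  then show ?case by (simp add: wabs_def QQ_def)
next
  case (Cons j js)
  then have j: "j \<notin> set js" and d: "distinct js" by auto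
  define n where "n = \<nu> j"
  define N where "N = (\<Sum>i\<in>set js. \<nu> i)"
  define F where "F w' = real (ff f (wabs (j#js) w')) * QQ b \<nu> (j#js) w' * g (f - wabs (j#js) w')" for w'
  have "Gchain b \<nu> (j # js) g f = Gchain b \<nu> js (Gstep b j n g) f" by (simp add: n_def)
  also have "\<dots> = (2*pi)^N * (\<Sum>w\<in>Wset \<nu> js. real (ff f (wabs js w)) * QQ b \<nu> js w * Gstep b j n g (f - wabs js w))"
    using Cons.IH[OF d] by (simp add: N_def)
  also have "(\<Sum>w\<in>Wset \<nu> js. real (ff f (wabs js w)) * QQ b \<nu> js w * Gstep b j n g (f - wabs js w))
     = (\<Sum>w\<in>Wset \<nu> js. (2*pi)^n * (\<Sum>m\<le>n. F (w(j := m))))"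
  proof (intro sum.cong refl)
    fix w assume "w \<in> Wset \<nu> js"
    have "real (ff f (wabs js w)) * QQ b \<nu> js w * Gstep b j n g (f - wabs js w)
      = (2*pi)^n * (\<Sum>m\<le>n. real (ff f (wabs js w)) * QQ b \<nu> js w * (real (ff (f - wabs js w) m) * real (Stirling n m) * b j ^ m * g (f - wabs js w - m)))"
      unfolding Gstep_def by (simp add: sum_distrib_left mult_ac)
    also have "\<dots> = (2*pi)^n * (\<Sum>m\<le>n. F (w(j := m)))"
    proof (intro arg_cong[where f="\<lambda>x. (2*pi)^n * x"] sum.cong refl)
      fix m
      have e: "real (ff f (m + wabs js w)) = real (ff f (wabs js w)) * real (ff (f - wabs js w) m)"
        by (simp only: of_nat_mult[symmetric] ff_mult add.commute)
      show "real (ff f (wabs js w)) * QQ b \<nu> js w * (real (ff (f - wabs js w) m) * real (Stirling n m) * b j ^ m * g (f - wabs js w - m)) = F (w(j := m))"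
        unfolding F_def wabs_upd[OF j] QQ_upd[OF j] n_def[symmetric] e
        by (simp add: diff_diff_add add.commute mult_ac)
    qed
    finally show "real (ff f (wabs js w)) * QQ b \<nu> js w * Gstep b j n g (f - wabs js w) = (2*pi)^n * (\<Sum>m\<le>n. F (w(j := m)))" .
  qed
  also have "\<dots> = (2*pi)^n * (\<Sum>w\<in>Wset \<nu> js. \<Sum>m\<le>n. F (w(j := m)))"
    by (rule sum_distrib_left[symmetric])
  also have "(\<Sum>w\<in>Wset \<nu> js. \<Sum>m\<le>n. F (w(j := m))) = (\<Sum>w'\<in>Wset \<nu> (j # js). F w')"
  proof -
    have "(\<Sum>w'\<in>Wset \<nu> (j # js). F w') = (\<Sum>x\<in>{..n} \<times> Wset \<nu> js. F ((\<lambda>(m, w). w(j := m)) x))"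
      unfolding Wset_Cons(1)[OF j] n_def by (subst sum.reindex[OF Wset_Cons(2)[OF j]]) (simp add: o_def)
    also have "\<dots> = (\<Sum>m\<le>n. \<Sum>w\<in>Wset \<nu> js. F (w(j := m)))"
      by (subst sum.cartesian_product) (simp add: case_prod_beta')
    also have "\<dots> = (\<Sum>w\<in>Wset \<nu> js. \<Sum>m\<le>n. F (w(j := m)))" by (rule sum.swap)
    finally show ?thesis by simp
  qed
  finally have L: "Gchain b \<nu> (j # js) g f = (2*pi)^N * ((2*pi)^n * (\<Sum>w'\<in>Wset \<nu> (j # js). F w'))" .
  have s: "(\<Sum>i\<in>set (j#js). \<nu> i) = n + N" unfolding n_def N_def using j by simp
  show ?case unfolding L s F_def power_add by (simp only: mult_ac)
qed

lemma ff_zero: "d < k \<Longrightarrow> ff d k = 0"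
proof (induction k)
  case 0 then show ?case by simp
next
  case (Suc k) then show ?case by (cases "d < k") auto
qed

lemma ff_fact: "k \<le> d \<Longrightarrow> ff d k * fact (d - k) = fact d"
proof (induction k)
  case 0 then show ?case by simp
next
  case (Suc k)
  then have "d - k = Suc (d - Suc k)" by simp
  then have "fact (d - k) = (d - k) * fact (d - Suc k)" by (simp add: fact_Suc)
  then show ?case using Suc by (simp add: mult_ac)
qed

lemma ff_binom: "k \<le> d \<Longrightarrow> ff d k = fact k * (d choose k)"
proof -
  assume k: "k \<le> d"
  have "ff d k * fact (d - k) = fact k * (d choose k) * fact (d - k)"
    using ff_fact[OF k] binomial_fact_lemma[OF k] by (simp add: mult_ac)
  then show ?thesis by simp
qed

lemma ff_bound:
  fixes \<xi> :: real assumes "\<xi> \<ge> 0"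
  shows "real (ff d k) * (1 + \<xi>)^(d - k) \<le> fact k * (2 + \<xi>)^d"
proof (cases "k \<le> d")
  case False then show ?thesis using ff_zero[of d k] assms by simp
next
  case True
  have "(2 + \<xi>)^d = (\<Sum>i\<le>d. real (d choose i) * 1^i * (1+\<xi>)^(d-i))"
    using binomial_ring[of "1::real" "1+\<xi>" d] by simp
  moreover have "real (d choose k) * 1^k * (1+\<xi>)^(d-k) \<le> (\<Sum>i\<le>d. real (d choose i) * 1^i * (1+\<xi>)^(d-i))"
    by (rule member_le_sum) (use True assms in auto)
  ultimately have "real (d choose k) * (1+\<xi>)^(d-k) \<le> (2 + \<xi>)^d" by simp
  then have "fact k * (real (d choose k) * (1+\<xi>)^(d-k)) \<le> fact k * (2 + \<xi>)^d"
    by (intro mult_left_mono) auto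
  then show ?thesis using ff_binom[OF True] by (simp add: mult_ac)
qed

lemma Gchain_bound:
  fixes \<xi> :: real
  assumes "distinct js" "\<xi> \<ge> 0" "\<And>i. b i \<ge> 0"
  shows "Gchain b \<nu> js (\<lambda>f. (1+\<xi>)^f) d \<le> (2+\<xi>)^d * (2*pi)^(\<Sum>i\<in>set js. \<nu> i) *
     (\<Sum>w\<in>Wset \<nu> js. fact (wabs js w) * QQ b \<nu> js w)"
proof -
  have Q: "QQ b \<nu> js w \<ge> 0" for w unfolding QQ_def using assms(3) by (intro prod_nonneg) auto
  have "(\<Sum>w\<in>Wset \<nu> js. real (ff d (wabs js w)) * QQ b \<nu> js w * (1+\<xi>)^(d - wabs js w))
     \<le> (\<Sum>w\<in>Wset \<nu> js. (2+\<xi>)^d * (fact (wabs js w) * QQ b \<nu> js w))"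
  proof (rule sum_mono)
    fix w
    have "real (ff d (wabs js w)) * (1+\<xi>)^(d - wabs js w) * QQ b \<nu> js w \<le> fact (wabs js w) * (2 + \<xi>)^d * QQ b \<nu> js w"
      by (intro mult_right_mono ff_bound Q assms(2))
    then show "real (ff d (wabs js w)) * QQ b \<nu> js w * (1+\<xi>)^(d - wabs js w) \<le> (2+\<xi>)^d * (fact (wabs js w) * QQ b \<nu> js w)"
      by (simp add: mult_ac)
  qed
  then have "(2*pi)^(\<Sum>i\<in>set js. \<nu> i) * (\<Sum>w\<in>Wset \<nu> js. real (ff d (wabs js w)) * QQ b \<nu> js w * (1+\<xi>)^(d - wabs js w))
     \<le> (2*pi)^(\<Sum>i\<in>set js. \<nu> i) * (\<Sum>w\<in>Wset \<nu> js. (2+\<xi>)^d * (fact (wabs js w) * QQ b \<nu> js w))"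
    by (intro mult_left_mono) auto
  then show ?thesis unfolding Gchain_closed[OF assms(1)] sum_distrib_left[symmetric] by (simp only: mult_ac)
qed


definition plist :: "('n::finite \<Rightarrow> 'n) list" where
  "plist = (SOME xs. distinct xs \<and> set xs = {p. p permutes (UNIV::'n set)})"

lemma plist: "distinct (plist::('n::finite \<Rightarrow> 'n) list)" "set (plist::('n::finite \<Rightarrow> 'n) list) = {p. p permutes (UNIV::'n set)}"
proof -
  have "\<exists>xs::('n \<Rightarrow> 'n) list. distinct xs \<and> set xs = {p. p permutes (UNIV::'n set)}"
    using finite_distinct_list[of "{p. p permutes (UNIV::'n set)}"] finite_permutations[of "UNIV::'n set"] by auto
  from someI_ex[OF this] show "distinct (plist::('n::finite \<Rightarrow> 'n) list)" "set (plist::('n::finite \<Rightarrow> 'n) list) = {p. p permutes (UNIV::'n set)}"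
    unfolding plist_def by auto
qed

definition L0 :: "'n::finite trm list" where
  "L0 = map (\<lambda>p. (of_int (sign p), \<lambda>k. Full (p k))) plist"

lemma det_VV: "det (\<chi> k l. Efun \<alpha> k l z) = VV \<alpha> (L0::'n::finite trm list) z"
proof -
  have "VV \<alpha> (L0::'n trm list) z = (\<Sum>p\<in>set plist. of_int (sign p) * (\<Prod>k\<in>UNIV. Efun \<alpha> k (p k) z))"
    unfolding VV_def L0_def by (simp add: sum_list_distinct_conv_sum_set[OF plist(1)] o_def tval_def fval_def)
  then show ?thesis unfolding det_def plist(2) by simp
qed

lemma Efun_bound:
  assumes b: "summable b" and ab: "\<And>i. \<bar>\<alpha> k l i\<bar> \<le> b i"
  shows "\<bar>Efun \<alpha> k l z\<bar> \<le> 1 + suminf b"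
proof -
  have t: "\<bar>sin (2*pi*z i) * \<alpha> k l i\<bar> \<le> b i" for i
  proof -
    have "\<bar>sin (2*pi*z i)\<bar> * \<bar>\<alpha> k l i\<bar> \<le> 1 * b i"
      by (rule mult_mono) (auto simp: ab abs_sin_le_one)
    then show ?thesis by (simp add: abs_mult)
  qed
  have sa: "summable (\<lambda>i. \<bar>sin (2*pi*z i) * \<alpha> k l i\<bar>)"
    by (rule summable_rabs_comparison_test[OF _ b]) (use t in auto)
  have "\<bar>\<Sum>i. sin (2*pi*z i) * \<alpha> k l i\<bar> \<le> (\<Sum>i. \<bar>sin (2*pi*z i) * \<alpha> k l i\<bar>)"
    by (rule summable_rabs[OF sa])
  also have "\<dots> \<le> suminf b" by (rule suminf_le[OF t sa b])
  finally have S: "\<bar>\<Sum>i. sin (2*pi*z i) * \<alpha> k l i\<bar> \<le> suminf b" .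
  have "\<bar>Efun \<alpha> k l z\<bar> \<le> \<bar>(if k = l then 1 else 0)::real\<bar> + \<bar>\<Sum>i. sin (2*pi*z i) * \<alpha> k l i\<bar>"
    unfolding Efun_def by (rule abs_triangle_ineq)
  moreover have "\<bar>(if k = l then 1 else 0)::real\<bar> \<le> 1" by simp
  ultimately show ?thesis using S by linarith
qed

lemma fval_bound:
  assumes b: "summable b" and ab: "\<And>k l i. \<bar>\<alpha> k l i\<bar> \<le> b i"
  shows "\<bar>fval \<alpha> k s z\<bar> \<le> beta b (suminf b) s"
proof (cases s)
  case (Full l) then show ?thesis using Efun_bound[OF b ab] by (simp add: fval_def)
next
  case (Sing l j a)
  have "\<bar>\<alpha> k l j * (2*pi)^a * trig a (2*pi*z j)\<bar> = \<bar>\<alpha> k l j\<bar> * (2*pi)^a * \<bar>trig a (2*pi*z j)\<bar>"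
    by (simp add: abs_mult)
  also have "\<dots> \<le> b j * (2*pi)^a * 1"
    using ab[of k l j] by (intro mult_mono ab trig_bound) auto
  finally show ?thesis using Sing by (simp add: fval_def mult.commute)
next
  case Zero then show ?thesis by (simp add: fval_def)
qed

lemma prod_beta: "(\<Prod>k\<in>UNIV. beta b \<xi> ((st::'n::finite \<Rightarrow> 'n fst) k)) = Psi b \<xi> (\<lambda>f. (1+\<xi>)^f) st"
proof -
  have "(\<Prod>k\<in>UNIV. beta b \<xi> (st k)) = (\<Prod>k\<in>{k. isF (st k)}. beta b \<xi> (st k)) * (\<Prod>k\<in>{k. \<not> isF (st k)}. beta b \<xi> (st k))"
  proof -
    have e: "(UNIV::'n set) - {k. isF (st k)} = {k. \<not> isF (st k)}" by auto
    show ?thesis using prod.Int_Diff[where A=UNIV and g="\<lambda>k. beta b \<xi> (st k)" and B="{k. isF (st k)}"] e by simp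
  qed
  also have "(\<Prod>k\<in>{k. isF (st k)}. beta b \<xi> (st k)) = (\<Prod>k\<in>{k. isF (st k)}. 1 + \<xi>)"
  proof (intro prod.cong refl)
    fix k assume "k \<in> {k. isF (st k)}"
    then show "beta b \<xi> (st k) = 1 + \<xi>" by (cases "st k") auto
  qed
  finally show ?thesis unfolding Psi_def PN_def by (simp add: mult.commute)
qed

lemma VV_bound:
  assumes b: "summable b" and ab: "\<And>k l i. \<bar>\<alpha> k l i\<bar> \<le> b i"
  shows "\<bar>VV \<alpha> (L::'n::finite trm list) z\<bar> \<le> WL b (suminf b) (\<lambda>f. (1 + suminf b)^f) L"
proof (induction L)
  case Nil then show ?case by simp
next
  case (Cons t L)
  have "\<bar>tval \<alpha> t z\<bar> = \<bar>fst t\<bar> * (\<Prod>k\<in>UNIV. \<bar>fval \<alpha> k (snd t k) z\<bar>)"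
    by (simp add: tval_def abs_mult abs_prod)
  also have "\<dots> \<le> \<bar>fst t\<bar> * (\<Prod>k\<in>UNIV. beta b (suminf b) (snd t k))"
    by (intro mult_left_mono prod_mono) (auto intro: fval_bound[OF b ab])
  finally have "\<bar>tval \<alpha> t z\<bar> \<le> \<bar>fst t\<bar> * Psi b (suminf b) (\<lambda>f. (1 + suminf b)^f) (snd t)"
    by (simp add: prod_beta)
  then show ?case using Cons by simp
qed

lemma abs_sgn1: "\<bar>real_of_int (sign p)\<bar> = 1" by (simp add: sign_def)

lemma WL_L0: "WL b \<xi> g (L0::'n::finite trm list) = fact CARD('n) * g CARD('n)"
proof -
  have "WL b \<xi> g (L0::'n trm list) = (\<Sum>p\<leftarrow>(plist::('n\<Rightarrow>'n) list). g CARD('n))"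
    unfolding WL_def L0_def by (simp add: o_def Psi_def PN_def abs_sgn1)
  also have "\<dots> = real (length (plist::('n\<Rightarrow>'n) list)) * g CARD('n)" by (simp add: sum_list_triv)
  also have "length (plist::('n\<Rightarrow>'n) list) = fact CARD('n)"
  proof -
    have "card (set (plist::('n\<Rightarrow>'n) list)) = fact CARD('n)" unfolding plist(2) by (rule card_permutations) simp_all
    moreover have "card (set (plist::('n\<Rightarrow>'n) list)) = length (plist::('n\<Rightarrow>'n) list)" by (rule distinct_card[OF plist(1)])
    ultimately show ?thesis by simp
  qed
  finally show ?thesis by simp
qed


lemma core:
  fixes \<alpha> :: "'n::finite \<Rightarrow> 'n \<Rightarrow> nat \<Rightarrow> real"
  assumes b: "summable b" "\<And>i. b i \<ge> 0" and ab: "\<And>k l i. \<bar>\<alpha> k l i\<bar> \<le> b i" and nu: "finite (mi_supp \<nu>)"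
  shows "\<bar>pderiv_multi \<nu> (\<lambda>z. det (\<chi> k l. Efun \<alpha> k l z)) y\<bar> \<le> fact CARD('n) * (2 + suminf b)^CARD('n) * (2*pi)^mi_abs \<nu> *
    (\<Sum>w\<in>{w. \<forall>j. w j \<le> \<nu> j}. fact (mi_abs w) * mi_pow b w * (\<Prod>i\<in>mi_supp \<nu>. real (Stirling (\<nu> i) (w i))))"
proof -
  define js where "js = sorted_list_of_set (mi_supp \<nu>)"
  define \<xi> where "\<xi> = suminf b"
  have xi: "\<xi> \<ge> 0" unfolding \<xi>_def by (rule suminf_nonneg[OF b(1) b(2)])
  have sjs: "set js = mi_supp \<nu>" and djs: "distinct js" using nu by (simp_all add: js_def)
  have f: "(\<lambda>z. det (\<chi> k l. Efun \<alpha> k l z)) = VV \<alpha> (L0::'n trm list)" by (rule ext) (rule det_VV)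
  have "\<bar>pderiv_multi \<nu> (\<lambda>z. det (\<chi> k l. Efun \<alpha> k l z)) y\<bar> = \<bar>VV \<alpha> (Dmulti \<nu> (L0::'n trm list)) y\<bar>"
    unfolding f pderiv_multi_VV[OF b(1) ab] by simp
  also have "\<dots> \<le> WL b \<xi> (\<lambda>f. (1 + \<xi>)^f) (Dmulti \<nu> (L0::'n trm list))"
    unfolding \<xi>_def by (rule VV_bound[OF b(1) ab])
  also have "\<dots> = WL b \<xi> (Gchain b \<nu> js (\<lambda>f. (1 + \<xi>)^f)) (L0::'n trm list)"
    unfolding Dmulti_def js_def[symmetric]
  proof (rule WL_foldr[OF djs])
    show "\<forall>i\<in>set js. noS i (L0::'n trm list)" by (auto simp: noS_def L0_def)
  qed
  also have "\<dots> = fact CARD('n) * Gchain b \<nu> js (\<lambda>f. (1 + \<xi>)^f) CARD('n)" by (rule WL_L0)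
  also have "\<dots> \<le> fact CARD('n) * ((2+\<xi>)^CARD('n) * (2*pi)^(\<Sum>i\<in>set js. \<nu> i) *
     (\<Sum>w\<in>Wset \<nu> js. fact (wabs js w) * QQ b \<nu> js w))"
    by (intro mult_left_mono Gchain_bound djs xi b(2)) simp
  also have "(\<Sum>i\<in>set js. \<nu> i) = mi_abs \<nu>" unfolding sjs mi_abs_def ..
  also have "Wset \<nu> js = {w. \<forall>j. w j \<le> \<nu> j}"
    unfolding Wset_def sjs mi_supp_def
  proof (intro Collect_cong iffI allI conjI ballI impI)
    fix w :: "nat \<Rightarrow> nat" and j
    assume a: "(\<forall>i\<in>{j. \<nu> j \<noteq> 0}. w i \<le> \<nu> i) \<and> (\<forall>i. i \<notin> {j. \<nu> j \<noteq> 0} \<longrightarrow> w i = 0)"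
    show "w j \<le> \<nu> j" using a by (cases "\<nu> j = 0") auto
  next
    fix w :: "nat \<Rightarrow> nat" and i assume "\<forall>j. w j \<le> \<nu> j" "i \<notin> {j. \<nu> j \<noteq> 0}"
    then show "w i = 0" by (metis le_zero_eq mem_Collect_eq)
  qed auto
  also have "(\<Sum>w\<in>{w. \<forall>j. w j \<le> \<nu> j}. fact (wabs js w) * QQ b \<nu> js w)
     = (\<Sum>w\<in>{w. \<forall>j. w j \<le> \<nu> j}. fact (mi_abs w) * mi_pow b w * (\<Prod>i\<in>mi_supp \<nu>. real (Stirling (\<nu> i) (w i))))"
  proof (intro sum.cong refl)
    fix w assume "w \<in> {w. \<forall>j. w j \<le> \<nu> j}"
    then have sub: "mi_supp w \<subseteq> set js" unfolding sjs mi_supp_def by (auto simp: le_zero_eq) (metis less_le_trans)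
    have fin: "finite (set js)" by simp
    have "wabs js w = mi_abs w" unfolding wabs_def mi_abs_def
      by (rule sum.mono_neutral_left[OF fin sub, symmetric]) (auto simp: mi_supp_def)
    moreover have "(\<Prod>i\<in>set js. b i ^ w i) = mi_pow b w" unfolding mi_pow_def
      by (rule prod.mono_neutral_left[OF fin sub, symmetric]) (auto simp: mi_supp_def)
    moreover have "QQ b \<nu> js w = (\<Prod>i\<in>set js. real (Stirling (\<nu> i) (w i))) * (\<Prod>i\<in>set js. b i ^ w i)"
      unfolding QQ_def by (rule prod.distrib)
    ultimately show "fact (wabs js w) * QQ b \<nu> js w = fact (mi_abs w) * mi_pow b w * (\<Prod>i\<in>mi_supp \<nu>. real (Stirling (\<nu> i) (w i)))"
      unfolding sjs by (simp add: mult_ac)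
  qed
  finally show ?thesis unfolding \<xi>_def by (simp add: mult_ac)
qed


lemma AE_open_cont:
  fixes D :: "(real^'n) set" and f :: "real^'n \<Rightarrow> real"
  assumes D: "open D" and f: "continuous_on D f" and ae: "AE x in lebesgue_on D. f x \<le> c"
  shows "\<forall>x\<in>D. f x \<le> c"
proof (rule ccontr)
  assume "\<not> (\<forall>x\<in>D. f x \<le> c)"
  then obtain x0 where x0: "x0 \<in> D" "c < f x0" by (auto simp: not_le)
  define U where "U = f -` {c<..} \<inter> D"
  have oU: "open U" using continuous_on_open_vimage[OF D, of f] f open_greaterThan[of c] unfolding U_def by blast
  have "x0 \<in> U" using x0 by (simp add: U_def)
  then obtain r where r: "r > 0" "ball x0 r \<subseteq> U" using oU open_contains_ball by blast
  have Dl: "D \<inter> space (completion lborel) \<in> sets (completion lborel)" using D by simp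
  have "AE x in completion lborel. x \<in> D \<longrightarrow> f x \<le> c"
    using ae AE_restrict_space_iff[OF Dl] by simp
  then have "AE x in lborel. x \<in> D \<longrightarrow> f x \<le> c" by (simp add: AE_completion_iff)
  moreover have Us: "U \<in> sets lborel" using oU by simp
  ultimately have "emeasure lborel U = 0"
    by (subst AE_iff_measurable[symmetric, where P="\<lambda>x. x \<in> D \<longrightarrow> f x \<le> c"]) (use Us[unfolded U_def] in \<open>auto simp: U_def not_le\<close>)
  moreover have "emeasure lborel (ball x0 r) \<le> emeasure lborel U"
    by (rule emeasure_mono[OF r(2)]) (simp add: oU)
  ultimately have "emeasure lborel (ball x0 r) = 0" by simp
  then have "measure lborel (ball x0 r) = 0" by (simp add: measure_def)
  with content_ball_pos[OF r(1), of x0] show False by simp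
qed

lemma entry_le_spec: "\<bar>(A::real^'n^'m) $ k $ l\<bar> \<le> spec_norm A"
proof -
  have "\<bar>(A *v axis l 1) $ k\<bar> \<le> norm (A *v axis l 1)" by (rule component_le_norm_cart)
  also have "\<dots> \<le> onorm (\<lambda>v. A *v v) * norm (axis l (1::real))"
    by (rule onorm) simp
  finally show ?thesis by (simp add: spec_norm_def matrix_vector_mult_basis column_def)
qed


lemma Vmap_single: "Vmap psi x (\<lambda>m. if m = i then 1/4 else 0) = x + (1 / sqrt 6) *\<^sub>R psi i x"
proof -
  have "(\<lambda>m. sin (2 * pi * (if m = i then 1/4 else 0)) *\<^sub>R psi m x) = (\<lambda>m. if m = i then psi i x else 0)"
  proof (rule ext)
    fix m
    have "sin (2 * pi * (1/4::real)) = 1" by (simp add: mult.commute[of 2] divide_inverse[symmetric])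
    then show "sin (2 * pi * (if m = i then 1/4 else 0)) *\<^sub>R psi m x = (if m = i then psi i x else 0)" by simp
  qed
  moreover have "(\<lambda>m. if m = i then psi i x else 0) sums psi i x" 
  proof -
    have "(\<lambda>m. if m = i then psi i x else 0) = (\<lambda>r. if r = i then psi r x else 0)" by auto
    then show ?thesis using sums_single[of i "\<lambda>m. psi m x"] by simp
  qed
  ultimately have "(\<Sum>m. sin (2 * pi * (if m = i then 1/4 else 0)) *\<^sub>R psi m x) = psi i x" by (simp add: sums_iff)
  then show ?thesis unfolding Vmap_def by simp
qed

lemma psi_jac_cont:
  fixes psi :: "nat \<Rightarrow> real^'n \<Rightarrow> real^'n" and Dref :: "(real^'n) set"
  assumes A2: "\<exists>C. \<forall>z. (\<forall>i. z i \<in> {0..1}) \<longrightarrow>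
               C2_bounded_on (\<lambda>x. Vmap psi x z) Dref C \<and>
               C2_bounded_on (inv_into (closure Dref) (\<lambda>x. Vmap psi x z)) ((\<lambda>x. Vmap psi x z) ` Dref) C"
  shows "continuous_on Dref (\<lambda>x. jacobian (psi i) (at x) $ k $ l)"
proof -
  define z0 where "z0 = (\<lambda>m::nat. if m = i then 1/4 else (0::real))"
  have z0: "\<forall>m. z0 m \<in> {0..1}" by (simp add: z0_def)
  obtain C where "C2_bounded_on (\<lambda>x. Vmap psi x z0) Dref C" using A2 z0 by blast
  then obtain f' :: "real^'n \<Rightarrow> (real^'n) \<Rightarrow>\<^sub>L (real^'n)" where
    d: "\<forall>x\<in>Dref. ((\<lambda>x. Vmap psi x z0) has_derivative blinfun_apply (f' x)) (at x)" and
    u: "uniformly_continuous_on Dref f'"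
    unfolding C2_bounded_on_def by blast
  have pe: "psi i = (\<lambda>x. sqrt 6 *\<^sub>R (Vmap psi x z0 - x))"
    by (rule ext) (simp add: z0_def Vmap_single)
  have j: "jacobian (psi i) (at x) $ k $ l = (sqrt 6 *\<^sub>R (blinfun_apply (f' x) (axis l 1) - axis l 1)) $ k" if x: "x \<in> Dref" for x
  proof -
    have "((\<lambda>x. sqrt 6 *\<^sub>R (Vmap psi x z0 - x)) has_derivative (\<lambda>h. sqrt 6 *\<^sub>R (blinfun_apply (f' x) h - h))) (at x)"
      using d x by (auto intro!: derivative_eq_intros)
    then have "frechet_derivative (psi i) (at x) = (\<lambda>h. sqrt 6 *\<^sub>R (blinfun_apply (f' x) h - h))"
      unfolding pe by (rule frechet_derivative_at[symmetric])
    then show ?thesis by (simp add: jacobian_def matrix_def)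
  qed
  have c: "continuous_on Dref f'" by (rule uniformly_continuous_imp_continuous[OF u])
  have "continuous_on Dref (\<lambda>x. (sqrt 6 *\<^sub>R (blinfun_apply (f' x) (axis l 1) - axis l 1)) $ k)"
    by (intro continuous_intros c)
  moreover have "continuous_on Dref (\<lambda>x. (sqrt 6 *\<^sub>R (blinfun_apply (f' x) (axis l 1) - axis l 1)) $ k)
     = continuous_on Dref (\<lambda>x. jacobian (psi i) (at x) $ k $ l)"
    by (rule continuous_on_cong) (simp_all add: j)
  ultimately show ?thesis by simp
qed


lemma psi_entry_bound:
  fixes psi :: "nat \<Rightarrow> real^'n \<Rightarrow> real^'n" and Dref :: "(real^'n) set"
  assumes D: "open Dref" and Dne: "Dref \<noteq> {}"
    and A2: "\<exists>C. \<forall>z. (\<forall>i. z i \<in> {0..1}) \<longrightarrow>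
               C2_bounded_on (\<lambda>x. Vmap psi x z) Dref C \<and>
               C2_bounded_on (inv_into (closure Dref) (\<lambda>x. Vmap psi x z)) ((\<lambda>x. Vmap psi x z) ` Dref) C"
    and fin: "W1inf Dref (psi i) < \<infinity>"
  shows "\<forall>x\<in>Dref. \<bar>jacobian (psi i) (at x) $ k $ l\<bar> \<le> real_of_ereal (W1inf Dref (psi i))"
proof -
  have "AE x in lebesgue_on Dref. ereal (spec_norm (jacobian (psi i) (at x))) \<le> Linf_on Dref (\<lambda>x. spec_norm (jacobian (psi i) (at x)))"
    unfolding Linf_on_def by (rule esssup_AE)
  moreover have "Linf_on Dref (\<lambda>x. spec_norm (jacobian (psi i) (at x))) \<le> W1inf Dref (psi i)"
    unfolding W1inf_def by simp
  ultimately have ae: "AE x in lebesgue_on Dref. ereal (spec_norm (jacobian (psi i) (at x))) \<le> W1inf Dref (psi i)"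
    by (auto elim: eventually_mono)
  show ?thesis
  proof (cases "W1inf Dref (psi i)")
    case (real w)
    have "AE x in lebesgue_on Dref. \<bar>jacobian (psi i) (at x) $ k $ l\<bar> \<le> w"
      using ae real by (auto elim!: eventually_mono intro: order.trans[OF entry_le_spec])
    moreover have "continuous_on Dref (\<lambda>x. \<bar>jacobian (psi i) (at x) $ k $ l\<bar>)"
      by (intro continuous_intros psi_jac_cont[OF A2])
    ultimately show ?thesis using AE_open_cont[OF D] real by auto
  next
    case PInf then show ?thesis using fin by simp
  next
    case MInf
    have "AE x in lebesgue_on Dref. (\<lambda>_. 1::real) x \<le> 0"
      using ae MInf by (auto elim!: eventually_mono)
    then have "\<forall>x\<in>Dref. (1::real) \<le> 0" using AE_open_cont[OF D, of "\<lambda>_. 1::real" 0] by simp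
    then show ?thesis using Dne by auto
  qed
qed

lemma Jmat_Efun:
  fixes psi :: "nat \<Rightarrow> real^'n \<Rightarrow> real^'n"
  assumes bd: "\<And>i k l. \<bar>jacobian (psi i) (at x) $ k $ l\<bar> \<le> c i" and c: "summable c"
  shows "Jmat psi x z = (\<chi> k l. Efun (\<lambda>k l i. (1 / sqrt 6) * (jacobian (psi i) (at x) $ k $ l)) k l z)"
proof -
  define J where "J i = jacobian (psi i) (at x)" for i
  define S where "S i = sin (2*pi*z i) *\<^sub>R J i" for i
  have nS: "norm (S i) \<le> real (CARD('n) * CARD('n)) * c i" for i
  proof -
    have "norm (S i) \<le> norm (J i)" unfolding S_def by (simp add: abs_sin_le_one mult_left_le_one_le)
    also have "\<dots> \<le> (\<Sum>k\<in>UNIV. norm (J i $ k))" by (simp add: norm_vec_def L2_set_le_sum)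
    also have "\<dots> \<le> (\<Sum>k\<in>(UNIV::'n set). \<Sum>l\<in>(UNIV::'n set). c i)"
    proof (rule sum_mono)
      fix k
      have "norm (J i $ k) \<le> (\<Sum>l\<in>UNIV. \<bar>J i $ k $ l\<bar>)" by (rule norm_le_l1_cart)
      also have "\<dots> \<le> (\<Sum>l\<in>(UNIV::'n set). c i)" by (rule sum_mono) (simp add: J_def bd)
      finally show "norm (J i $ k) \<le> (\<Sum>l\<in>(UNIV::'n set). c i)" .
    qed
    finally show ?thesis by simp
  qed
  have sS: "summable S"
    by (rule summable_comparison_test'[OF summable_mult[OF c], of 0]) (use nS in auto)
  have comp: "(\<Sum>i. S i) $ k $ l = (\<Sum>i. sin (2*pi*z i) * (J i $ k $ l))" for k l
  proof -
    have "(\<lambda>i. S i $ k $ l) sums ((\<Sum>i. S i) $ k $ l)"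
      by (intro sums_vec_nth summable_sums[OF sS])
    then show ?thesis by (simp add: S_def sums_iff)
  qed
  have "Jmat psi x z $ k $ l = Efun (\<lambda>k l i. 1 / sqrt 6 * (jacobian (psi i) (at x) $ k $ l)) k l z" for k l
  proof -
    have sk: "summable (\<lambda>i. sin (2*pi*z i) * (J i $ k $ l))"
    proof -
      have "(\<lambda>i. S i $ k $ l) sums ((\<Sum>i. S i) $ k $ l)"
        by (intro sums_vec_nth summable_sums[OF sS])
      then show ?thesis by (simp add: S_def sums_iff)
    qed
    have "(\<Sum>i. sin (2*pi*z i) * ((1 / sqrt 6) * (J i $ k $ l))) = (1 / sqrt 6) * (\<Sum>i. sin (2*pi*z i) * (J i $ k $ l))"
      using suminf_mult[OF sk, of "1 / sqrt 6"] by (simp add: mult_ac)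
    then show "Jmat psi x z $ k $ l = Efun (\<lambda>k l i. 1 / sqrt 6 * (jacobian (psi i) (at x) $ k $ l)) k l z"
      unfolding Jmat_def Efun_def using comp[of k l] by (simp add: S_def J_def mat_def)
  qed
  then show ?thesis by (simp add: vec_eq_iff)
qed

lemma meas_VV:
  fixes \<alpha> :: "'a \<Rightarrow> 'n::finite \<Rightarrow> 'n \<Rightarrow> nat \<Rightarrow> real"
  assumes m: "\<And>k l i. (\<lambda>x. \<alpha> x k l i) \<in> borel_measurable M"
  shows "(\<lambda>x. VV (\<alpha> x) (L::'n trm list) y) \<in> borel_measurable M"
proof -
  have mf: "(\<lambda>x. fval (\<alpha> x) k s y) \<in> borel_measurable M" for k s
  proof (cases s)
    case (Full l)
    have "(\<lambda>x. \<Sum>i. sin (2*pi*y i) * \<alpha> x k l i) \<in> borel_measurable M"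
      by (intro borel_measurable_suminf borel_measurable_times borel_measurable_const m)
    then show ?thesis unfolding Full fval_def Efun_def by simp
  next
    case (Sing l j a)
    show ?thesis unfolding Sing fval_def by (simp, intro borel_measurable_times borel_measurable_const m)
  next
    case Zero show ?thesis unfolding Zero fval_def by simp
  qed
  show ?thesis
  proof (induction L)
    case Nil then show ?case by simp
  next
    case (Cons t L)
    have "(\<lambda>x. tval (\<alpha> x) t y) \<in> borel_measurable M"
      unfolding tval_def by (intro borel_measurable_times borel_measurable_const borel_measurable_prod mf)
    then show ?case using Cons by simp
  qed
qed


theorem lemma3p2:
  fixes Dref :: "(real^'n) set" and psi :: "nat \<Rightarrow> real^'n \<Rightarrow> real^'n"
    and smin smax :: real and y :: "nat \<Rightarrow> real" and \<nu> :: "nat \<Rightarrow> nat"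
  assumes dim: "CARD('n) = 2 \<or> CARD('n) = 3"
    and dom: "bounded Dref" "lipschitz_domain Dref"
    and A1: "\<forall>z. (\<forall>i. z i \<in> {0..1}) \<longrightarrow> inj_on (\<lambda>x. Vmap psi x z) (closure Dref)"
    and A2: "\<exists>C. \<forall>z. (\<forall>i. z i \<in> {0..1}) \<longrightarrow>
               C2_bounded_on (\<lambda>x. Vmap psi x z) Dref C \<and>
               C2_bounded_on (inv_into (closure Dref) (\<lambda>x. Vmap psi x z)) ((\<lambda>x. Vmap psi x z) ` Dref) C"
    and A3: "0 < smin" "smin \<le> 1" "1 \<le> smax"
            "\<forall>x\<in>Dref. \<forall>z. (\<forall>i. z i \<in> {0..1}) \<longrightarrow>
               (\<forall>s. singular_value (Jmat psi x z) s \<longrightarrow> smin \<le> s \<and> s \<le> smax)"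
    and A4: "\<forall>i. W1inf Dref (psi i) < \<infinity>"
            "summable (\<lambda>i. real_of_ereal (W1inf Dref (psi i)))"
    and y: "\<forall>i. y i \<in> {0..1}"
    and nu: "finite {j. \<nu> j \<noteq> 0}"
  shows "Linf_on Dref (\<lambda>x. \<bar>pderiv_multi \<nu> (\<lambda>z. det (Jmat psi x z)) y\<bar>)
         \<le> ereal (fact CARD('n) * (2 + (\<Sum>i. bcoef Dref psi i)) ^ CARD('n) * (2 * pi) ^ mi_abs \<nu> *
              (\<Sum>w\<in>{w. \<forall>j. w j \<le> \<nu> j}. fact (mi_abs w) * mi_pow (bcoef Dref psi) w *
                  (\<Prod>i\<in>mi_supp \<nu>. real (Stirling (\<nu> i) (w i)))))"
proof -
  define b where "b = bcoef Dref psi"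
  define \<alpha> where "\<alpha> x k l i = (1 / sqrt 6) * (jacobian (psi i) (at x) $ k $ l)" for x k l i
  define RHS where "RHS = fact CARD('n) * (2 + suminf b) ^ CARD('n) * (2 * pi) ^ mi_abs \<nu> *
              (\<Sum>w\<in>{w. \<forall>j. w j \<le> \<nu> j}. fact (mi_abs w) * mi_pow b w *
                  (\<Prod>i\<in>mi_supp \<nu>. real (Stirling (\<nu> i) (w i))))"
  define M where "M = Dmulti \<nu> (L0::'n trm list)"
  have D: "open Dref" and Dne: "Dref \<noteq> {}" using dom(2) unfolding lipschitz_domain_def by auto
  have nu': "finite (mi_supp \<nu>)" using nu by (simp add: mi_supp_def)
  have jb: "\<forall>x\<in>Dref. \<bar>jacobian (psi i) (at x) $ k $ l\<bar> \<le> sqrt 6 * b i" for i k l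
    using psi_entry_bound[OF D Dne A2 A4(1)[rule_format, of i], of k l] by (simp add: b_def bcoef_def)
  have ab: "\<bar>\<alpha> x k l i\<bar> \<le> b i" if "x \<in> Dref" for x k l i
  proof -
    have "\<bar>\<alpha> x k l i\<bar> = \<bar>jacobian (psi i) (at x) $ k $ l\<bar> / sqrt 6" by (simp add: \<alpha>_def abs_mult)
    also have "\<dots> \<le> sqrt 6 * b i / sqrt 6" using jb that by (intro divide_right_mono) auto
    finally show ?thesis by simp
  qed
  obtain x0 where x0: "x0 \<in> Dref" using Dne by blast
  have b0: "b i \<ge> 0" for i using ab[OF x0, of undefined undefined i] by linarith
  have bs: "summable b" unfolding b_def bcoef_def by (intro summable_divide A4(2))
  have bs6: "summable (\<lambda>i. sqrt 6 * b i)" by (intro summable_mult bs)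
  have eq: "pderiv_multi \<nu> (\<lambda>z. det (Jmat psi x z)) y = VV (\<alpha> x) M y"
    and bnd: "\<bar>pderiv_multi \<nu> (\<lambda>z. det (Jmat psi x z)) y\<bar> \<le> RHS" if x: "x \<in> Dref" for x
  proof -
    have J: "(\<lambda>z. det (Jmat psi x z)) = (\<lambda>z. det (\<chi> k l. Efun (\<alpha> x) k l z))"
      using Jmat_Efun[of psi x "\<lambda>i. sqrt 6 * b i", OF _ bs6] jb x unfolding \<alpha>_def by (metis (no_types, lifting))
    show "pderiv_multi \<nu> (\<lambda>z. det (Jmat psi x z)) y = VV (\<alpha> x) M y"
      unfolding J det_VV M_def pderiv_multi_VV[OF bs ab[OF x]] ..
    show "\<bar>pderiv_multi \<nu> (\<lambda>z. det (Jmat psi x z)) y\<bar> \<le> RHS"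
      unfolding J RHS_def by (rule core[OF bs b0 ab[OF x] nu'])
  qed
  have ma: "(\<lambda>x. \<alpha> x k l i) \<in> borel_measurable (lebesgue_on Dref)" for k l i
  proof -
    have "continuous_on Dref (\<lambda>x. \<alpha> x k l i)" unfolding \<alpha>_def
      by (intro continuous_intros psi_jac_cont[OF A2])
    then show ?thesis by (rule continuous_imp_measurable_on_sets_lebesgue) (use D in simp)
  qed
  have "(\<lambda>x. ereal \<bar>VV (\<alpha> x) M y\<bar>) \<in> borel_measurable (lebesgue_on Dref)"
    by (intro borel_measurable_ereal borel_measurable_abs meas_VV ma)
  then have meas: "(\<lambda>x. ereal \<bar>pderiv_multi \<nu> (\<lambda>z. det (Jmat psi x z)) y\<bar>) \<in> borel_measurable (lebesgue_on Dref)"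
    by (rule measurable_cong[THEN iffD1, rotated]) (simp add: eq)
  have "Linf_on Dref (\<lambda>x. \<bar>pderiv_multi \<nu> (\<lambda>z. det (Jmat psi x z)) y\<bar>) \<le> ereal RHS"
    unfolding Linf_on_def by (rule esssup_I[OF meas]) (rule AE_I2, simp add: bnd)
  then show ?thesis unfolding RHS_def b_def .
qed


end
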